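(* Let $f_0,f_2>0$, let $0<\Lambda_1<\Lambda_{in}$, and let $\mathfrak{c}:[\Lambda_1,\Lambda_{in}]\to\mathbb{R}$ be continuous with $192 f_2\Lambda^2-2f_0\mathfrak{c}(\Lambda)\neq 0$ for all $\Lambda$. Define $$G_{\rm eff}(\Lambda)=\frac{3\pi}{192 f_2\Lambda^2-2f_0\,\mathfrak{c}(\Lambda)} .$$ Let $h:[\Lambda_1,\Lambda_{in}]\to\mathbb{R}$ be continuous with $1-\tfrac{4\pi}{3}G_{\rm eff}(\Lambda)h(\Lambda)\neq 0$, and define $G_{{\rm eff},H}(\Lambda)=\dfrac{G_{\rm eff}(\Lambda)}{1-\frac{4\pi}{3}G_{\rm eff}(\Lambda)h(\Lambda)}$. Use the time–energy relation $\Lambda=t^{-1/2}$ (so $t\in[\Lambda_{in}^{-2},\Lambda_1^{-2}]$), and for a function $\mathcal{M}$ of $t$ write $\mathcal{M}(\Lambda):=\mathcal{M}(t)$ at $t=\Lambda^{-2}$. (a) (No gravitational memory.) If $\mathcal{M}:[\Lambda_{in}^{-2},\Lambda_1^{-2}]\to(0,\infty)$ is differentiable and satisfies $\dfrac{d\mathcal{M}}{dt}=-\big(G_{\rm eff}(t^{-1/2})\,\mathcal{M}(t)\big)^{-2}$, then for every $\Lambda\in[\Lambda_1,\Lambda_{in}]$ $$\mathcal{M}(\Lambda)=\sqrt[3]{\mathcal{M}^3(\Lambda_{in})-\frac{2}{3\pi^2}\int_\Lambda^{\Lambda_{in}}\frac{(192 f_2x^2-2f_0\mathfrak{c}(x))^2}{x^3}\,dx}.$$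 (b) (Gravitational memory.) If $\mathcal{M}:[\Lambda_{in}^{-2},\Lambda_1^{-2}]\to(0,\infty)$ is differentiable and satisfies $\dfrac{d\mathcal{M}}{dt}=-\big(G_{{\rm eff},H}(t^{-1/2})\,\mathcal{M}(t)\big)^{-2}$, then for every $\Lambda\in[\Lambda_1,\Lambda_{in}]$ $$\mathcal{M}(\Lambda)=\sqrt[3]{\mathcal{M}^3(\Lambda_{in})-6\int_\Lambda^{\Lambda_{in}}\frac{\big(1-\frac{4\pi}{3}G_{\rm eff}(x)h(x)\big)^2}{x^3\,G_{\rm eff}(x)^2}\,dx}.$$
   Context: Physical interpretation: $\mathcal{M}$ is the mass of a primordial black hole evaporating by Hawking radiation in the radiation-dominated era ($a(t)=t^{1/2}$, energy $\Lambda=1/a(t)$), $\Lambda_{in}$ the energy at which this era begins. $G_{\rm eff}$ is the effective gravitational constant of the noncommutative geometry model, with $\mathfrak{c}(\Lambda)=\mathrm{Tr}(MM^\dagger)$ the renormalization-group-running trace of the squared Majorana mass matrix, and $h(\Lambda)$ plays the role of $|H|^2$ for a (nearly constant) Higgs field $H$; in the paper it is taken to be $|H|^2\sim\mu_0^2/(2\lambda_0)$. $G_{{\rm eff},H}$ is the effective gravitational constant modified by the conformal coupling $-\frac1{12}\int R|H|^2$ to the Higgs field. *)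

theory Defs
  imports "HOL-Analysis.Analysis"
begin

definition G_eff :: "real \<Rightarrow> real \<Rightarrow> (real \<Rightarrow> real) \<Rightarrow> real \<Rightarrow> real" where
  "G_eff f0 f2 c \<Lambda> = 3 * pi / (192 * f2 * \<Lambda>^2 - 2 * f0 * c \<Lambda>)"

definition G_effH :: "real \<Rightarrow> real \<Rightarrow> (real \<Rightarrow> real) \<Rightarrow> (real \<Rightarrow> real) \<Rightarrow> real \<Rightarrow> real" where
  "G_effH f0 f2 c h \<Lambda> = G_eff f0 f2 c \<Lambda> / (1 - 4 * pi / 3 * G_eff f0 f2 c \<Lambda> * h \<Lambda>)"

end

theory Submission imports Defs begin

lemma gen:
  fixes a b :: real and M phi :: "real \<Rightarrow> real"
  assumes ab: "0 < a" "a < b"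
    and phic: "continuous_on {a..b} phi"
    and hyp: "\<forall>t\<in>{1/b^2..1/a^2}. M t > 0 \<and>
       (M has_real_derivative (- (phi (1 / sqrt t) / (M t)^2))) (at t within {1/b^2..1/a^2})"
    and L: "L \<in> {a..b}"
  shows "M (1/L^2) = root 3 ((M (1/b^2))^3 - 6 * integral {L..b} (\<lambda>x. phi x / x^3))"
proof -
  let ?T = "{1/b^2..1/a^2}"
  let ?f = "\<lambda>x. phi x / x^3"
  have fc: "continuous_on {a..b} ?f"
    using ab by (intro continuous_intros phic) auto
  have inT: "1/x^2 \<in> ?T" if "x \<in> {a..b}" for x
    using that ab by (auto simp: divide_simps power_mono)
  define F where "F x = (M (1/x^2))^3 + 6 * integral {x..b} ?f" for x
  have D: "(F has_real_derivative 0) (at x within {a..b})" if x: "x \<in> {a..b}" for x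
  proof -
    have xp: "x > 0" using x ab by auto
    have sq: "1 / sqrt (1/x^2) = x" using xp by (simp add: real_sqrt_divide)
    have Mp: "M (1/x^2) > 0" using hyp inT[OF x] by auto
    have dM: "(M has_real_derivative (- (phi x / (M (1/x^2))^2))) (at (1/x^2) within (\<lambda>x. 1/x^2) ` {a..b})"
    proof -
      have "(M has_real_derivative (- (phi (1 / sqrt (1/x^2)) / (M (1/x^2))^2))) (at (1/x^2) within ?T)"
        using hyp inT[OF x] by blast
      hence "(M has_real_derivative (- (phi x / (M (1/x^2))^2))) (at (1/x^2) within ?T)"
        by (simp only: sq)
      moreover have "(\<lambda>x. 1/x^2) ` {a..b} \<subseteq> ?T" using inT by blast
      ultimately show ?thesis by (rule has_field_derivative_subset)
    qed
    have dg: "((\<lambda>x. 1/x^2) has_real_derivative (- 2 / x^3)) (at x within {a..b})"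
      using xp by (auto intro!: derivative_eq_intros simp: field_simps power2_eq_square power3_eq_cube)
    have c1: "((M \<circ> (\<lambda>x. 1/x^2)) has_real_derivative (- (phi x / (M (1/x^2))^2)) * (- 2 / x^3)) (at x within {a..b})"
      by (rule DERIV_image_chain[OF dM dg])
    have c2: "((\<lambda>x. (M (1/x^2))^3) has_real_derivative real 3 * ((- (phi x / (M (1/x^2))^2)) * (- 2 / x^3) * (M (1/x^2))^(3 - Suc 0))) (at x within {a..b})"
      using DERIV_power[OF c1, of 3] by (simp only: o_def)
    have c3: "((\<lambda>x. integral {x..b} ?f) has_real_derivative - ?f x) (at x within {a..b})"
      by (rule integral_has_real_derivative'[OF fc x])
    have "(F has_real_derivative real 3 * ((- (phi x / (M (1/x^2))^2)) * (- 2 / x^3) * (M (1/x^2))^(3 - Suc 0)) + 6 * (- ?f x)) (at x within {a..b})"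
      unfolding F_def by (intro DERIV_add DERIV_cmult c2 c3)
    moreover have "real 3 * ((- (phi x / (M (1/x^2))^2)) * (- 2 / x^3) * (M (1/x^2))^(3 - Suc 0)) + 6 * (- ?f x) = 0"
      using Mp by (simp add: field_simps)
    ultimately show ?thesis by simp
  qed
  obtain k where k: "\<forall>x\<in>{a..b}. F x = k"
    using has_field_derivative_zero_constant[of "{a..b}" F] D by auto
  have "F L = F b" using k L ab by auto
  hence e: "(M (1/L^2))^3 = (M (1/b^2))^3 - 6 * integral {L..b} ?f"
    unfolding F_def by simp
  have "M (1/L^2) > 0" using hyp inT[OF L] by auto
  thus ?thesis unfolding e[symmetric] by (simp add: real_root_power_cancel)
qed

lemma invA: "inverse ((3*pi/(D::real) * m)^2) = (D^2/(9*pi^2)) / m^2"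
  by (cases "D = 0"; cases "m = 0") (simp_all add: field_simps power_mult_distrib)

lemma invB: "inverse ((G/(E::real) * m)^2) = (E^2/G^2) / m^2"
  by (cases "G = 0"; cases "E = 0"; cases "m = 0") (simp_all add: field_simps power_mult_distrib)

theorem proposition4p7:
  fixes f0 f2 \<Lambda>1 \<Lambda>in :: real and c h :: "real \<Rightarrow> real"
  assumes f0: "f0 > 0" and f2: "f2 > 0"
    and L1: "0 < \<Lambda>1" and L1in: "\<Lambda>1 < \<Lambda>in"
    and c_cont: "continuous_on {\<Lambda>1..\<Lambda>in} c"
    and c_nz: "\<forall>\<Lambda>\<in>{\<Lambda>1..\<Lambda>in}. 192 * f2 * \<Lambda>^2 - 2 * f0 * c \<Lambda> \<noteq> 0"
    and h_cont: "continuous_on {\<Lambda>1..\<Lambda>in} h"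
    and h_nz: "\<forall>\<Lambda>\<in>{\<Lambda>1..\<Lambda>in}. 1 - 4 * pi / 3 * G_eff f0 f2 c \<Lambda> * h \<Lambda> \<noteq> 0"
  shows
    "(\<forall>M :: real \<Rightarrow> real.
        ((\<forall>t\<in>{1 / \<Lambda>in^2 .. 1 / \<Lambda>1^2}. M t > 0 \<and>
            (M has_real_derivative
               (- inverse ((G_eff f0 f2 c (1 / sqrt t) * M t)^2)))
             (at t within {1 / \<Lambda>in^2 .. 1 / \<Lambda>1^2})))
        \<longrightarrow> (\<forall>\<Lambda>\<in>{\<Lambda>1..\<Lambda>in}.
              M (1 / \<Lambda>^2) =
                root 3 ((M (1 / \<Lambda>in^2))^3 - 2 / (3 * pi^2) *
                  integral {\<Lambda>..\<Lambda>in}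
                    (\<lambda>x. (192 * f2 * x^2 - 2 * f0 * c x)^2 / x^3))))
     \<and>
     (\<forall>M :: real \<Rightarrow> real.
        ((\<forall>t\<in>{1 / \<Lambda>in^2 .. 1 / \<Lambda>1^2}. M t > 0 \<and>
            (M has_real_derivative
               (- inverse ((G_effH f0 f2 c h (1 / sqrt t) * M t)^2)))
             (at t within {1 / \<Lambda>in^2 .. 1 / \<Lambda>1^2})))
        \<longrightarrow> (\<forall>\<Lambda>\<in>{\<Lambda>1..\<Lambda>in}.
              M (1 / \<Lambda>^2) =
                root 3 ((M (1 / \<Lambda>in^2))^3 - 6 *
                  integral {\<Lambda>..\<Lambda>in}
                    (\<lambda>x. (1 - 4 * pi / 3 * G_eff f0 f2 c x * h x)^2
                          / (x^3 * (G_eff f0 f2 c x)^2)))))"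
  proof -
  let ?D = "\<lambda>x. 192 * f2 * x^2 - 2 * f0 * c x"
  let ?G = "G_eff f0 f2 c"
  have Dc: "continuous_on {\<Lambda>1..\<Lambda>in} ?D"
    by (intro continuous_intros c_cont)
  have Gc: "continuous_on {\<Lambda>1..\<Lambda>in} ?G"
    unfolding G_eff_def[abs_def] using c_nz by (intro continuous_intros Dc) auto
  have Gnz: "\<forall>x\<in>{\<Lambda>1..\<Lambda>in}. ?G x \<noteq> 0"
    using c_nz by (simp add: G_eff_def)
  show ?thesis
  proof (intro conjI allI impI ballI)
    fix M :: "real \<Rightarrow> real" and L
    assume H: "\<forall>t\<in>{1 / \<Lambda>in^2 .. 1 / \<Lambda>1^2}. M t > 0 \<and>
            (M has_real_derivative
               (- inverse ((G_eff f0 f2 c (1 / sqrt t) * M t)^2)))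
             (at t within {1 / \<Lambda>in^2 .. 1 / \<Lambda>1^2})"
      and L: "L \<in> {\<Lambda>1..\<Lambda>in}"
    let ?phi = "\<lambda>y. ?D y ^2 / (9*pi^2)"
    have pc: "continuous_on {\<Lambda>1..\<Lambda>in} ?phi" by (intro continuous_intros Dc) auto
    have H': "\<forall>t\<in>{1 / \<Lambda>in^2 .. 1 / \<Lambda>1^2}. M t > 0 \<and>
            (M has_real_derivative (- (?phi (1 / sqrt t) / (M t)^2)))
             (at t within {1 / \<Lambda>in^2 .. 1 / \<Lambda>1^2})"
      using H by (simp only: G_eff_def invA)
    have "M (1/L^2) = root 3 ((M (1/\<Lambda>in^2))^3 - 6 * integral {L..\<Lambda>in} (\<lambda>x. ?phi x / x^3))"
      by (rule gen[OF L1 L1in pc H' L])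
    moreover have "(\<lambda>x. ?phi x / x^3) = (\<lambda>x. (1/(9*pi^2)) * (?D x ^2 / x^3))" by auto
    hence "6 * integral {L..\<Lambda>in} (\<lambda>x. ?phi x / x^3) = 2 / (3 * pi^2) * integral {L..\<Lambda>in} (\<lambda>x. ?D x ^2 / x^3)"
      by (simp only: integral_mult_right)
    ultimately show "M (1/L^2) = root 3 ((M (1/\<Lambda>in^2))^3 - 2 / (3 * pi^2) *
                  integral {L..\<Lambda>in} (\<lambda>x. (192 * f2 * x^2 - 2 * f0 * c x)^2 / x^3))"
      by simp
  next
    fix M :: "real \<Rightarrow> real" and L
    assume H: "\<forall>t\<in>{1 / \<Lambda>in^2 .. 1 / \<Lambda>1^2}. M t > 0 \<and>
            (M has_real_derivative
               (- inverse ((G_effH f0 f2 c h (1 / sqrt t) * M t)^2)))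
             (at t within {1 / \<Lambda>in^2 .. 1 / \<Lambda>1^2})"
      and L: "L \<in> {\<Lambda>1..\<Lambda>in}"
    let ?E = "\<lambda>y. 1 - 4 * pi / 3 * ?G y * h y"
    let ?phi = "\<lambda>y. ?E y ^2 / ?G y ^2"
    have pc: "continuous_on {\<Lambda>1..\<Lambda>in} ?phi" using Gnz by (intro continuous_intros Gc h_cont) auto
    have H': "\<forall>t\<in>{1 / \<Lambda>in^2 .. 1 / \<Lambda>1^2}. M t > 0 \<and>
            (M has_real_derivative (- (?phi (1 / sqrt t) / (M t)^2)))
             (at t within {1 / \<Lambda>in^2 .. 1 / \<Lambda>1^2})"
      using H by (simp only: G_effH_def invB)
    have "M (1/L^2) = root 3 ((M (1/\<Lambda>in^2))^3 - 6 * integral {L..\<Lambda>in} (\<lambda>x. ?phi x / x^3))"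
      by (rule gen[OF L1 L1in pc H' L])
    moreover have "(\<lambda>x. ?phi x / x^3) = (\<lambda>x. ?E x ^2 / (x^3 * ?G x ^2))" by (auto simp: field_simps)
    ultimately show "M (1/L^2) = root 3 ((M (1/\<Lambda>in^2))^3 - 6 *
                  integral {L..\<Lambda>in}
                    (\<lambda>x. (1 - 4 * pi / 3 * G_eff f0 f2 c x * h x)^2
                          / (x^3 * (G_eff f0 f2 c x)^2)))"
      by simp
  qed
qed

end
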